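(* Let $c<d$ and for each $i\in\mathbb{N}$ let $T_i=\{(x,y):\alpha_i(y)\le x\le\beta_i(y),\ c<y\le d_i\}\subset\mathbb{R}\times(c,d]$ be a half open trapezoid, where $d_i\in(c,d]$ and $\alpha_i,\beta_i:(c,d_i]\to\mathbb{R}$ are continuous with $\alpha_i<\beta_i$. Suppose $T_i\cap T_j=\varnothing$ for $i\neq j$ and $\lim_{i\to\infty}d_i=c$. Then there exists a homeomorphism $\eta:\mathbb{R}\times(c,d]\to\mathbb{R}\times(c,d]$ such that $\eta(\mathbb{R}\times y)=\mathbb{R}\times y$ for all $y\in(c,d]$, and each $\eta(T_i)$ is a half open rectangle, i.e. of the form $[p_i,q_i]\times(c,d_i]$ for some $p_i<q_i$.
   Context: A half open trapezoid is a set $\{(x,y):\alpha(y)\le x\le\beta(y),\ c'<y\le d'\}$ with $\alpha<\beta$ continuous on $(c',d']$; $d'$ is the level of its upper base. It is a half open rectangle if $\alpha,\beta$ are constant. *)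

theory Defs
  imports "HOL-Analysis.Analysis"
begin

definition half_open_trapezoid ::
  "real \<Rightarrow> real \<Rightarrow> (real \<Rightarrow> real) \<Rightarrow> (real \<Rightarrow> real) \<Rightarrow> (real \<times> real) set" where
  "half_open_trapezoid c d' \<alpha> \<beta> = {(x, y). \<alpha> y \<le> x \<and> x \<le> \<beta> y \<and> c < y \<and> y \<le> d'}"

end

theory Submission
  imports Defs "HOL-Homology.Invariance_of_Domain"
begin


definition clamp :: "real \<Rightarrow> real \<Rightarrow> real \<Rightarrow> real" where
  "clamp a b x = max a (min x b)"

definition PL :: "real \<Rightarrow> real \<Rightarrow> real \<Rightarrow> real \<Rightarrow> real \<Rightarrow> real \<Rightarrow> real \<Rightarrow> real" where
  "PL l r u v s t x = x + ((s-l)/(u-l) - 1) * (clamp l u x - l)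
     + ((t-s)/(v-u) - 1) * (clamp u v x - u) + ((r-t)/(r-v) - 1) * (clamp v r x - v)"

lemma clamp_same[simp]: "clamp a a x = a" by (simp add: clamp_def)

lemma PL_id: "PL l r s t s t x = x"
  by (cases "s = l"; cases "t = s"; cases "r = t") (simp_all add: PL_def)

lemma PL_le: "l \<le> u \<Longrightarrow> u \<le> v \<Longrightarrow> x \<le> l \<Longrightarrow> PL l r u v s t x = x"
  by (simp add: PL_def clamp_def)

lemma G: "(y::real) \<noteq> 0 \<Longrightarrow> (x / y - 1) * y = x - y"
  by (simp add: left_diff_distrib)

lemma PL_ge: assumes "l < u" "u < v" "v < r" "r \<le> x" shows "PL l r u v s t x = x"
proof -
  have c: "clamp l u x = u" "clamp u v x = v" "clamp v r x = r" using assms by (auto simp: clamp_def)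
  show ?thesis unfolding PL_def c using G[of "u-l"] G[of "v-u"] G[of "r-v"] assms by simp
qed

lemma PL_u: "l < u \<Longrightarrow> u < v \<Longrightarrow> v < r \<Longrightarrow> PL l r u v s t u = s"
  using G[of "u-l"] by (simp add: PL_def clamp_def)

lemma PL_v: "l < u \<Longrightarrow> u < v \<Longrightarrow> v < r \<Longrightarrow> PL l r u v s t v = t"
  using G[of "u-l"] G[of "v-u"] by (simp add: PL_def clamp_def)

lemma PL_strict:
  assumes o: "l < u" "u < v" "v < r" "l < s" "s < t" "t < r" and xx: "x < x'"
  shows "PL l r u v s t x < PL l r u v s t x'"
proof -
  define m1 where "m1 = (s-l)/(u-l)"
  define m2 where "m2 = (t-s)/(v-u)"
  define m3 where "m3 = (r-t)/(r-v)"
  have m: "m1 > 0" "m2 > 0" "m3 > 0" using o by (auto simp: m1_def m2_def m3_def)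
  define c1 where "c1 = (\<lambda>x. clamp l u x - l)"
  define c2 where "c2 = (\<lambda>x. clamp u v x - u)"
  define c3 where "c3 = (\<lambda>x. clamp v r x - v)"
  have e: "\<And>x. PL l r u v s t x = (x - c1 x - c2 x - c3 x) + m1 * c1 x + m2 * c2 x + m3 * c3 x"
    by (simp add: PL_def m1_def m2_def m3_def c1_def c2_def c3_def algebra_simps)
  have d1: "c1 x \<le> c1 x'" "c2 x \<le> c2 x'" "c3 x \<le> c3 x'"
    using xx by (auto simp: c1_def c2_def c3_def clamp_def)
  have d0: "x - c1 x - c2 x - c3 x \<le> x' - c1 x' - c2 x' - c3 x'"
    using xx o by (auto simp: c1_def c2_def c3_def clamp_def max_def min_def)
  have sum: "(x' - c1 x' - c2 x' - c3 x') - (x - c1 x - c2 x - c3 x)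
      + (c1 x' - c1 x) + (c2 x' - c2 x) + (c3 x' - c3 x) = x' - x" by simp
  have p1: "m1 * (c1 x' - c1 x) \<ge> 0" "m2 * (c2 x' - c2 x) \<ge> 0" "m3 * (c3 x' - c3 x) \<ge> 0"
    using m d1 by auto
  have q: "m1 * (c1 x' - c1 x) > 0 \<or> m2 * (c2 x' - c2 x) > 0 \<or> m3 * (c3 x' - c3 x) > 0
        \<or> (x' - c1 x' - c2 x' - c3 x') - (x - c1 x - c2 x - c3 x) > 0"
  proof (rule ccontr)
    assume nt: "\<not> ?thesis"
    hence "c1 x' - c1 x \<le> 0" "c2 x' - c2 x \<le> 0" "c3 x' - c3 x \<le> 0"
      using m by (auto simp: zero_less_mult_iff)
    thus False using nt sum xx by linarith
  qed
  show ?thesis unfolding e using p1 q d0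
    by (simp add: algebra_simps) (smt (verit))
qed

lemma PL_cont:
  assumes "continuous_on S fl" "continuous_on S fr" "continuous_on S fu" "continuous_on S fv"
    "continuous_on S fs" "continuous_on S ft" "continuous_on S fx"
    and o: "\<And>z. z \<in> S \<Longrightarrow> fl z < fu z \<and> fu z < fv z \<and> fv z < fr z"
  shows "continuous_on S (\<lambda>z. PL (fl z) (fr z) (fu z) (fv z) (fs z) (ft z) (fx z))"
  unfolding PL_def clamp_def
  using assms(1-7) o
  by (intro continuous_intros) (auto dest: o)

lemma PL_cont_x: "l < u \<Longrightarrow> u < v \<Longrightarrow> v < r \<Longrightarrow> continuous_on S (PL l r u v s t)"
  using PL_cont[of S "\<lambda>_. l" "\<lambda>_. r" "\<lambda>_. u" "\<lambda>_. v" "\<lambda>_. s" "\<lambda>_. t" "\<lambda>x. x"]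
  by auto

lemma PL_surj:
  assumes o: "l < u" "u < v" "v < r"
  shows "\<exists>x. PL l r u v s t x = z"
proof -
  have "continuous_on {min z l..max z r} (PL l r u v s t)" using PL_cont_x o by blast
  moreover have "PL l r u v s t (min z l) \<le> z" using o by (subst PL_le) auto
  moreover have "z \<le> PL l r u v s t (max z r)" using o by (subst PL_ge) auto
  moreover have "min z l \<le> max z r" by auto
  ultimately show ?thesis using IVT'[of "PL l r u v s t" "min z l" z "max z r"] by blast
qed



locale setting =
  fixes c d :: real and dd :: "nat \<Rightarrow> real" and \<alpha> \<beta> :: "nat \<Rightarrow> real \<Rightarrow> real"
  assumes cd: "c < d"
    and ddb: "\<And>i. c < dd i \<and> dd i \<le> d"
    and ca: "\<And>i. continuous_on {c<..dd i} (\<alpha> i)"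
    and cb: "\<And>i. continuous_on {c<..dd i} (\<beta> i)"
    and ab: "\<And>i y. y \<in> {c<..dd i} \<Longrightarrow> \<alpha> i y < \<beta> i y"
    and disj: "\<And>i j. i \<noteq> j \<Longrightarrow>
           half_open_trapezoid c (dd i) (\<alpha> i) (\<beta> i) \<inter> half_open_trapezoid c (dd j) (\<alpha> j) (\<beta> j) = {}"
    and lim: "dd \<longlonglongrightarrow> c"
begin

lemma fin_above: assumes "c < y" shows "finite {i. y \<le> dd i}"
proof -
  have "eventually (\<lambda>n. dd n < y) sequentially" using order_tendstoD(2)[OF lim assms] .
  then obtain N where "\<And>n. n \<ge> N \<Longrightarrow> dd n < y" by (auto simp: eventually_sequentially)
  hence "{i. y \<le> dd i} \<subseteq> {..<N}" by (force simp: not_le[symmetric])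
  thus ?thesis using finite_subset by blast
qed

lemma fin_above': assumes "c < y" shows "finite {i. y < dd i}"
  using fin_above[OF assms] by (rule finite_subset[rotated]) auto

definition prec :: "nat \<Rightarrow> nat \<Rightarrow> bool" where
  "prec j i \<longleftrightarrow> dd i < dd j \<or> (dd i = dd j \<and> j < i)"

definition rk :: "nat \<Rightarrow> nat" where "rk i = card {j. prec j i}"

lemma fin_prec: "finite {j. prec j i}"
proof -
  have "finite {j. dd i \<le> dd j}" using fin_above[of "dd i"] ddb[of i] by auto
  moreover have "{j. prec j i} \<subseteq> {j. dd i \<le> dd j}" by (auto simp: prec_def)
  ultimately show ?thesis using finite_subset by blast
qed

lemma prec_trans: "prec a b \<Longrightarrow> prec b e \<Longrightarrow> prec a e"
  by (auto simp: prec_def)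

lemma rk_less: assumes "prec j i" shows "rk j < rk i"
proof -
  have "{k. prec k j} \<subset> {k. prec k i}"
    using assms prec_trans by (auto simp: prec_def)
  thus ?thesis unfolding rk_def using fin_prec psubset_card_mono by blast
qed

lemma prec_total: "i \<noteq> j \<Longrightarrow> prec i j \<or> prec j i"
  by (auto simp: prec_def)

lemma rk_inj: "inj rk"
proof (rule injI)
  fix i j assume "rk i = rk j"
  thus "i = j" using prec_total[of i j] rk_less[of i j] rk_less[of j i] by force
qed

lemma rk_lt_dd: assumes "rk k < rk j" shows "dd j \<le> dd k" "k \<noteq> j"
proof -
  show "k \<noteq> j" using assms by auto
  hence "prec k j" using prec_total[of k j] rk_less[of j k] assms by auto
  thus "dd j \<le> dd k" by (auto simp: prec_def)
qed

lemma point_side: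
  assumes "i \<noteq> k" "y \<in> {c<..dd i}" "dd i \<le> dd k"
  shows "\<beta> i y < \<alpha> k y \<or> \<beta> k y < \<alpha> i y"
proof (rule ccontr)
  assume "\<not> ?thesis"
  hence h: "\<alpha> k y \<le> \<beta> i y" "\<alpha> i y \<le> \<beta> k y" by auto
  have y2: "y \<in> {c<..dd k}" using assms by auto
  define x where "x = max (\<alpha> i y) (\<alpha> k y)"
  have "(x, y) \<in> half_open_trapezoid c (dd i) (\<alpha> i) (\<beta> i)"
    using h ab[OF assms(2)] assms(2) by (auto simp: half_open_trapezoid_def x_def)
  moreover have "(x, y) \<in> half_open_trapezoid c (dd k) (\<alpha> k) (\<beta> k)"
    using h ab[OF y2] y2 by (auto simp: half_open_trapezoid_def x_def)
  ultimately show False using disj[OF assms(1)] by blast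
qed

lemma side:
  assumes "i \<noteq> k" "dd i \<le> dd k"
  shows "(\<forall>y\<in>{c<..dd i}. \<beta> i y < \<alpha> k y) \<or> (\<forall>y\<in>{c<..dd i}. \<beta> k y < \<alpha> i y)"
proof (rule ccontr)
  assume "\<not> ?thesis"
  then obtain y1 y2 where y1: "y1 \<in> {c<..dd i}" "\<not> \<beta> i y1 < \<alpha> k y1"
    and y2: "y2 \<in> {c<..dd i}" "\<not> \<beta> k y2 < \<alpha> i y2" by auto
  define f where "f = (\<lambda>y. (\<alpha> k y - \<beta> i y) - (\<alpha> i y - \<beta> k y))"
  have sub: "{c<..dd i} \<subseteq> {c<..dd k}" using assms by auto
  have fc: "continuous_on {c<..dd i} f" unfolding f_def
    using ca cb continuous_on_subset[OF _ sub]
    by (intro continuous_intros) auto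
  have pos: "f y > 0 \<or> f y < 0" if "y \<in> {c<..dd i}" for y
    using point_side[OF assms(1) that assms(2)] ab[OF that] ab[where i=k and y=y] that sub
    unfolding f_def by force
  have f1: "f y1 < 0"
    using point_side[OF assms(1) y1(1) assms(2)] y1 ab[OF y1(1)] ab[where i=k and y=y1] sub unfolding f_def by force
  have f2: "f y2 > 0"
    using point_side[OF assms(1) y2(1) assms(2)] y2 ab[OF y2(1)] ab[where i=k and y=y2] sub unfolding f_def by force
  have iv: "{min y1 y2..max y1 y2} \<subseteq> {c<..dd i}" using y1 y2 by auto
  have fc': "continuous_on {min y1 y2..max y1 y2} f" using continuous_on_subset[OF fc iv] .
  obtain y where y: "min y1 y2 \<le> y" "y \<le> max y1 y2" "f y = 0"
  proof (cases "y1 \<le> y2")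
    case True
    then show ?thesis using IVT'[of f y1 0 y2] fc' f1 f2 that by (auto simp: min_def max_def)
  next
    case False
    then show ?thesis using IVT2'[of f y1 0 y2] fc' f1 f2 that by (auto simp: min_def max_def)
  qed
  have "y \<in> {c<..dd i}" using y iv by auto
  thus False using pos[of y] y(3) by auto
qed

end


lemma cont_Max_insert:
  fixes f :: "'a::topological_space \<Rightarrow> real"
  assumes "finite K" "continuous_on S f"
  shows "continuous_on S (\<lambda>y. Max (insert (f y) K))"
proof (cases "K = {}")
  case True thus ?thesis using assms by simp
next
  case False
  hence e: "(\<lambda>y. Max (insert (f y) K)) = (\<lambda>y. max (f y) (Max K))" using assms by (simp add: Max_insert)
  show ?thesis unfolding e by (intro continuous_intros assms)
qed

lemma cont_Min_insert:
  fixes f :: "'a::topological_space \<Rightarrow> real"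
  assumes "finite K" "continuous_on S f"
  shows "continuous_on S (\<lambda>y. Min (insert (f y) K))"
proof (cases "K = {}")
  case True thus ?thesis using assms by simp
next
  case False
  hence e: "(\<lambda>y. Min (insert (f y) K)) = (\<lambda>y. min (f y) (Min K))" using assms by (simp add: Min_insert)
  show ?thesis unfolding e by (intro continuous_intros assms)
qed

lemma lift_snd:
  fixes h :: "real \<Rightarrow> real"
  assumes "continuous_on {c<..} h"
  shows "continuous_on (UNIV \<times> {c<..}) (\<lambda>z. h (snd z))"
  by (rule continuous_on_compose2[OF assms continuous_on_snd[OF continuous_on_id]]) auto

lemma smD: "strict_mono (\<lambda>x. \<phi> x w) \<Longrightarrow> a < b \<Longrightarrow> \<phi> a w < \<phi> b (w::real)"
  for \<phi> :: "real \<Rightarrow> real \<Rightarrow> real" by (simp add: strict_mono_def)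

lemma sm_less_iff: "strict_mono (\<lambda>x. \<phi> x w) \<Longrightarrow> \<phi> a w < \<phi> b (w::real) \<longleftrightarrow> a < b"
  for \<phi> :: "real \<Rightarrow> real \<Rightarrow> real" using strict_mono_less[of "\<lambda>x. \<phi> x w"] by simp

lemma sm_le_iff: "strict_mono (\<lambda>x. \<phi> x w) \<Longrightarrow> \<phi> a w \<le> \<phi> b (w::real) \<longleftrightarrow> a \<le> b"
  for \<phi> :: "real \<Rightarrow> real \<Rightarrow> real" using strict_mono_less_eq[of "\<lambda>x. \<phi> x w"] by simp

context setting begin

definition "idx n = inv_into UNIV rk n"
definition "Dn n = dd (idx n)"
definition aa :: "nat \<Rightarrow> (real \<Rightarrow> real \<Rightarrow> real) \<Rightarrow> real \<Rightarrow> real" where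
  "aa n \<phi> y = \<phi> (\<alpha> (idx n) (min y (Dn n))) (min y (Dn n))"
definition bb :: "nat \<Rightarrow> (real \<Rightarrow> real \<Rightarrow> real) \<Rightarrow> real \<Rightarrow> real" where
  "bb n \<phi> y = \<phi> (\<beta> (idx n) (min y (Dn n))) (min y (Dn n))"
definition "AA n \<phi> = aa n \<phi> (Dn n)"
definition "BB n \<phi> = bb n \<phi> (Dn n)"
definition "Lset n = {k. rk k < n \<and> (\<forall>z\<in>{c<..Dn n}. \<beta> k z < \<alpha> (idx n) z)}"
definition "Rset n = {k. rk k < n \<and> (\<forall>z\<in>{c<..Dn n}. \<beta> (idx n) z < \<alpha> k z)}"
definition ll :: "nat \<Rightarrow> (real \<Rightarrow> real \<Rightarrow> real) \<Rightarrow> real \<Rightarrow> real" where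
  "ll n \<phi> y = Max (insert (min (aa n \<phi> y) (AA n \<phi>) - 1) ((\<lambda>k. \<phi> (\<beta> k (dd k)) (dd k)) ` Lset n))"
definition rr :: "nat \<Rightarrow> (real \<Rightarrow> real \<Rightarrow> real) \<Rightarrow> real \<Rightarrow> real" where
  "rr n \<phi> y = Min (insert (max (bb n \<phi> y) (BB n \<phi>) + 1) ((\<lambda>k. \<phi> (\<alpha> k (dd k)) (dd k)) ` Rset n))"
definition stepmap :: "nat \<Rightarrow> (real \<Rightarrow> real \<Rightarrow> real) \<Rightarrow> real \<Rightarrow> real \<Rightarrow> real" where
  "stepmap n \<phi> x y = (if n \<in> range rk then
     PL (ll n \<phi> y) (rr n \<phi> y) (aa n \<phi> y) (bb n \<phi> y) (AA n \<phi>) (BB n \<phi>) x else x)"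

primrec Phi :: "nat \<Rightarrow> real \<Rightarrow> real \<Rightarrow> real" where
  "Phi 0 = (\<lambda>x y. x)"
| "Phi (Suc n) = (\<lambda>x y. stepmap n (Phi n) (Phi n x y) y)"

definition good :: "(real \<Rightarrow> real \<Rightarrow> real) \<Rightarrow> nat \<Rightarrow> bool" where
  "good \<phi> n \<longleftrightarrow> continuous_on (UNIV \<times> {c<..}) (\<lambda>z. \<phi> (fst z) (snd z))
     \<and> (\<forall>y>c. strict_mono (\<lambda>x. \<phi> x y)) \<and> (\<forall>y>c. surj (\<lambda>x. \<phi> x y))
     \<and> (\<forall>k. rk k < n \<longrightarrow> (\<forall>y\<in>{c<..dd k}. \<phi> (\<alpha> k y) y = \<phi> (\<alpha> k (dd k)) (dd k)
                                        \<and> \<phi> (\<beta> k y) y = \<phi> (\<beta> k (dd k)) (dd k)))"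

lemma fin_rk: "finite {k. rk k < n}"
proof -
  have "{k. rk k < n} = rk -` {..<n}" by auto
  thus ?thesis using finite_vimageI[OF _ rk_inj] by simp
qed

lemma fin_L: "finite (Lset n)" using fin_rk by (rule finite_subset[rotated]) (auto simp: Lset_def)
lemma fin_R: "finite (Rset n)" using fin_rk by (rule finite_subset[rotated]) (auto simp: Rset_def)

lemma idx_rk: "n \<in> range rk \<Longrightarrow> rk (idx n) = n"
  unfolding idx_def by (simp add: f_inv_into_f)

lemma Dn_gt: "c < Dn n" unfolding Dn_def using ddb by auto

lemma stepmap_above: "Dn n \<le> y \<Longrightarrow> stepmap n \<phi> x y = x"
  by (simp add: stepmap_def aa_def bb_def AA_def BB_def PL_id min_absorb2)

lemma order_facts:
  assumes g: "good \<phi> n" and n: "n \<in> range rk" and y: "c < y"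
  shows "ll n \<phi> y < aa n \<phi> y" "ll n \<phi> y < AA n \<phi>" "aa n \<phi> y < bb n \<phi> y" "AA n \<phi> < BB n \<phi>"
    "bb n \<phi> y < rr n \<phi> y" "BB n \<phi> < rr n \<phi> y"
proof -
  define i where "i = idx n"
  define D where "D = Dn n"
  have rki: "rk i = n" using idx_rk[OF n] i_def by simp
  have D: "D = dd i" "c < D" using Dn_gt D_def Dn_def i_def by auto
  have sm: "\<And>w. c < w \<Longrightarrow> strict_mono (\<lambda>x. \<phi> x w)" using g unfolding good_def by blast
  have inv4: "\<And>k w. rk k < n \<Longrightarrow> w \<in> {c<..dd k} \<Longrightarrow> \<phi> (\<alpha> k w) w = \<phi> (\<alpha> k (dd k)) (dd k)
                                        \<and> \<phi> (\<beta> k w) w = \<phi> (\<beta> k (dd k)) (dd k)"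
    using g unfolding good_def by blast
  have key_ab: "\<phi> (\<alpha> i w) w < \<phi> (\<beta> i w) w" if "w \<in> {c<..D}" for w
    using smD[where \<phi>=\<phi> and w=w, OF sm[of w]] ab[of w i] that D by auto
  have keyL: "\<forall>q\<in>(\<lambda>k. \<phi> (\<beta> k (dd k)) (dd k)) ` Lset n. q < \<phi> (\<alpha> i w) w" if w: "w \<in> {c<..D}" for w
  proof
    fix q assume "q \<in> (\<lambda>k. \<phi> (\<beta> k (dd k)) (dd k)) ` Lset n"
    then obtain k where k: "k \<in> Lset n" "q = \<phi> (\<beta> k (dd k)) (dd k)" by auto
    have rk: "rk k < rk i" using k rki by (auto simp: Lset_def)
    have "D \<le> dd k" using rk_lt_dd(1)[OF rk] D by simp
    hence wk: "w \<in> {c<..dd k}" using w by auto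
    have "q = \<phi> (\<beta> k w) w" using inv4[OF _ wk] k rki rk by auto
    moreover have "\<beta> k w < \<alpha> i w" using k w by (auto simp: Lset_def i_def D_def)
    ultimately show "q < \<phi> (\<alpha> i w) w" using smD[where \<phi>=\<phi> and w=w, OF sm[of w]] w by auto
  qed
  have keyR: "\<forall>q\<in>(\<lambda>k. \<phi> (\<alpha> k (dd k)) (dd k)) ` Rset n. \<phi> (\<beta> i w) w < q" if w: "w \<in> {c<..D}" for w
  proof
    fix q assume "q \<in> (\<lambda>k. \<phi> (\<alpha> k (dd k)) (dd k)) ` Rset n"
    then obtain k where k: "k \<in> Rset n" "q = \<phi> (\<alpha> k (dd k)) (dd k)" by auto
    have rk: "rk k < rk i" using k rki by (auto simp: Rset_def)
    have "D \<le> dd k" using rk_lt_dd(1)[OF rk] D by simp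
    hence wk: "w \<in> {c<..dd k}" using w by auto
    have "q = \<phi> (\<alpha> k w) w" using inv4[OF _ wk] k rki rk by auto
    moreover have "\<beta> i w < \<alpha> k w" using k w by (auto simp: Rset_def i_def D_def)
    ultimately show "\<phi> (\<beta> i w) w < q" using smD[where \<phi>=\<phi> and w=w, OF sm[of w]] w by auto
  qed
  have y': "min y D \<in> {c<..D}" using y D by auto
  have DD: "D \<in> {c<..D}" using D by auto
  have ea: "aa n \<phi> y = \<phi> (\<alpha> i (min y D)) (min y D)" "bb n \<phi> y = \<phi> (\<beta> i (min y D)) (min y D)"
    by (simp_all add: aa_def bb_def i_def D_def)
  have eA: "AA n \<phi> = \<phi> (\<alpha> i D) D" "BB n \<phi> = \<phi> (\<beta> i D) D"
    by (simp_all add: AA_def BB_def aa_def bb_def i_def D_def)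
  show 3: "aa n \<phi> y < bb n \<phi> y" using ea key_ab[OF y'] by simp
  show 4: "AA n \<phi> < BB n \<phi>" using eA key_ab[OF DD] by simp
  show "ll n \<phi> y < aa n \<phi> y" unfolding ll_def using fin_L keyL[OF y'] ea by simp
  show "ll n \<phi> y < AA n \<phi>" unfolding ll_def using fin_L keyL[OF DD] eA by simp
  show "bb n \<phi> y < rr n \<phi> y" unfolding rr_def using fin_R keyR[OF y'] ea by simp
  show "BB n \<phi> < rr n \<phi> y" unfolding rr_def using fin_R keyR[OF DD] eA by simp
qed

end


context setting begin

lemma good0: "good (Phi 0) 0"
  unfolding good_def by (auto simp: strict_mono_def intro: continuous_intros)

lemma cont_comp:
  assumes g: "good \<phi> n" and D: "c < D" and gc: "continuous_on {c<..D} h"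
  shows "continuous_on {c<..} (\<lambda>y. \<phi> (h (min y D)) (min y D))"
proof -
  have pc: "continuous_on (UNIV \<times> {c<..}) (\<lambda>z. \<phi> (fst z) (snd z))" using g unfolding good_def by blast
  have m: "continuous_on {c<..} (\<lambda>y. min y D)" by (intro continuous_intros)
  have m2: "(\<lambda>y. min y D) ` {c<..} \<subseteq> {c<..D}" using D by auto
  have g': "continuous_on {c<..} (\<lambda>y. h (min y D))"
    using continuous_on_compose2[OF gc m m2] .
  have p: "continuous_on {c<..} (\<lambda>y. (h (min y D), min y D))"
    using g' m by (intro continuous_intros)
  have p2: "(\<lambda>y. (h (min y D), min y D)) ` {c<..} \<subseteq> UNIV \<times> {c<..}" using D by auto
  show ?thesis using continuous_on_compose2[OF pc p p2] by simp
qed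

lemma cont_aa: "good \<phi> n \<Longrightarrow> continuous_on {c<..} (aa n \<phi>)"
  unfolding aa_def[abs_def] using cont_comp[where \<phi>=\<phi> and n=n and D="Dn n" and h="\<alpha> (idx n)", OF _ Dn_gt] ca Dn_def by auto

lemma cont_bb: "good \<phi> n \<Longrightarrow> continuous_on {c<..} (bb n \<phi>)"
  unfolding bb_def[abs_def] using cont_comp[where \<phi>=\<phi> and n=n and D="Dn n" and h="\<beta> (idx n)", OF _ Dn_gt] cb Dn_def by auto

lemma cont_ll: "good \<phi> n \<Longrightarrow> continuous_on {c<..} (ll n \<phi>)"
  unfolding ll_def[abs_def]
  by (rule cont_Max_insert) (auto simp: fin_L intro!: continuous_intros cont_aa)

lemma cont_rr: "good \<phi> n \<Longrightarrow> continuous_on {c<..} (rr n \<phi>)"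
  unfolding rr_def[abs_def]
  by (rule cont_Min_insert) (auto simp: fin_R intro!: continuous_intros cont_bb)

lemma stepmap_fix:
  assumes g: "good \<phi> n" and n: "n \<in> range rk" and k: "rk k < n" and w: "c < w"
    and v: "v = \<phi> (\<alpha> k (dd k)) (dd k) \<or> v = \<phi> (\<beta> k (dd k)) (dd k)"
  shows "stepmap n \<phi> v w = v"
proof (cases "Dn n \<le> w")
  case True thus ?thesis by (rule stepmap_above)
next
  case False
  define i where "i = idx n"
  have rki: "rk i = n" using idx_rk[OF n] i_def by simp
  have ik: "i \<noteq> k" and ddik: "dd i \<le> dd k" using rk_lt_dd[of k i] k rki by auto
  have Di: "Dn n = dd i" by (simp add: Dn_def i_def)
  have sm: "strict_mono (\<lambda>x. \<phi> x (dd k))" using g ddb[of k] unfolding good_def by auto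
  have pq: "\<phi> (\<alpha> k (dd k)) (dd k) < \<phi> (\<beta> k (dd k)) (dd k)"
    using smD[where \<phi>=\<phi>, OF sm] ab[of "dd k" k] ddb[of k] by auto
  have of: "ll n \<phi> w < aa n \<phi> w" "aa n \<phi> w < bb n \<phi> w" "bb n \<phi> w < rr n \<phi> w"
    using order_facts[OF g n w] by auto
  have em: "stepmap n \<phi> v w = PL (ll n \<phi> w) (rr n \<phi> w) (aa n \<phi> w) (bb n \<phi> w) (AA n \<phi>) (BB n \<phi>) v"
    using n by (simp add: stepmap_def)
  from side[OF ik ddik] show ?thesis
  proof
    assume "\<forall>y\<in>{c<..dd i}. \<beta> i y < \<alpha> k y"
    hence "k \<in> Rset n" using k Di by (auto simp: Rset_def i_def)
    hence "rr n \<phi> w \<le> \<phi> (\<alpha> k (dd k)) (dd k)" unfolding rr_def using fin_R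
      by (intro Min_le) auto
    hence "rr n \<phi> w \<le> v" using v pq by auto
    thus ?thesis unfolding em using of by (intro PL_ge) auto
  next
    assume "\<forall>y\<in>{c<..dd i}. \<beta> k y < \<alpha> i y"
    hence "k \<in> Lset n" using k Di by (auto simp: Lset_def i_def)
    hence "\<phi> (\<beta> k (dd k)) (dd k) \<le> ll n \<phi> w" unfolding ll_def using fin_L
      by (intro Max_ge) auto
    hence "v \<le> ll n \<phi> w" using v pq by auto
    thus ?thesis unfolding em using of by (intro PL_le) auto
  qed
qed

lemma good_Suc: assumes g: "good (Phi n) n" shows "good (Phi (Suc n)) (Suc n)"
proof (cases "n \<in> range rk")
  case False
  hence e: "Phi (Suc n) = Phi n" by (auto simp: stepmap_def)
  have "rk k < n" if "rk k < Suc n" for k using that False by (metis less_SucE rangeI)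
  thus ?thesis using g unfolding e good_def by blast
next
  case n: True
  define \<phi> where "\<phi> = Phi n"
  have g': "good \<phi> n" using g \<phi>_def by simp
  have e: "Phi (Suc n) x y = PL (ll n \<phi> y) (rr n \<phi> y) (aa n \<phi> y) (bb n \<phi> y) (AA n \<phi>) (BB n \<phi>) (\<phi> x y)"
    for x y using n by (simp add: stepmap_def \<phi>_def)
  have of: "ll n \<phi> y < aa n \<phi> y" "ll n \<phi> y < AA n \<phi>" "aa n \<phi> y < bb n \<phi> y" "AA n \<phi> < BB n \<phi>"
    "bb n \<phi> y < rr n \<phi> y" "BB n \<phi> < rr n \<phi> y" if "c < y" for y
    using order_facts[OF g' n that] by auto
  have pc: "continuous_on (UNIV \<times> {c<..}) (\<lambda>z. \<phi> (fst z) (snd z))" using g' unfolding good_def by blast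
  have sm: "\<And>w. c < w \<Longrightarrow> strict_mono (\<lambda>x. \<phi> x w)" using g' unfolding good_def by blast
  have su: "\<And>w. c < w \<Longrightarrow> surj (\<lambda>x. \<phi> x w)" using g' unfolding good_def by blast
  have inv4: "\<And>k w. rk k < n \<Longrightarrow> w \<in> {c<..dd k} \<Longrightarrow> \<phi> (\<alpha> k w) w = \<phi> (\<alpha> k (dd k)) (dd k)
                                        \<and> \<phi> (\<beta> k w) w = \<phi> (\<beta> k (dd k)) (dd k)"
    using g' unfolding good_def by blast
  have C1: "continuous_on (UNIV \<times> {c<..}) (\<lambda>z. Phi (Suc n) (fst z) (snd z))"
    unfolding e
    apply (rule PL_cont)
    using lift_snd[OF cont_ll[OF g']] lift_snd[OF cont_rr[OF g']] lift_snd[OF cont_aa[OF g']]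
      lift_snd[OF cont_bb[OF g']] pc of
    by (auto intro: continuous_intros)
  have C2: "strict_mono (\<lambda>x. Phi (Suc n) x y)" if y: "c < y" for y
    unfolding strict_mono_def e
  proof (intro allI impI)
    fix x x' :: real assume "x < x'"
    hence "\<phi> x y < \<phi> x' y" using smD[where \<phi>=\<phi>, OF sm[OF y]] by auto
    thus "PL (ll n \<phi> y) (rr n \<phi> y) (aa n \<phi> y) (bb n \<phi> y) (AA n \<phi>) (BB n \<phi>) (\<phi> x y)
        < PL (ll n \<phi> y) (rr n \<phi> y) (aa n \<phi> y) (bb n \<phi> y) (AA n \<phi>) (BB n \<phi>) (\<phi> x' y)"
      using of[OF y] by (intro PL_strict) auto
  qed
  have C3: "surj (\<lambda>x. Phi (Suc n) x y)" if y: "c < y" for y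
  proof -
    { fix t
      obtain x1 where x1: "PL (ll n \<phi> y) (rr n \<phi> y) (aa n \<phi> y) (bb n \<phi> y) (AA n \<phi>) (BB n \<phi>) x1 = t"
        using PL_surj of[OF y] by blast
      obtain x where "\<phi> x y = x1" using su[OF y] by (metis surjD)
      hence "t \<in> range (\<lambda>x. Phi (Suc n) x y)" unfolding e using x1 by auto }
    thus ?thesis by auto
  qed
  define i where "i = idx n"
  have rki: "rk i = n" using idx_rk[OF n] i_def by simp
  have Di: "Dn n = dd i" by (simp add: Dn_def i_def)
  have aw: "aa n \<phi> w = \<phi> (\<alpha> i w) w" "bb n \<phi> w = \<phi> (\<beta> i w) w" if "w \<le> dd i" for w
    using that by (simp_all add: aa_def bb_def i_def Di min_absorb1)
  have C4: "Phi (Suc n) (\<alpha> k w) w = Phi (Suc n) (\<alpha> k (dd k)) (dd k)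
          \<and> Phi (Suc n) (\<beta> k w) w = Phi (Suc n) (\<beta> k (dd k)) (dd k)"
    if k: "rk k < Suc n" and w: "w \<in> {c<..dd k}" for k w
  proof (cases "rk k = n")
    case True
    hence ki: "k = i" using rki rk_inj by (auto dest: injD)
    have wk: "c < dd k" using ddb by auto
    have "Phi (Suc n) (\<alpha> k v) v = AA n \<phi> \<and> Phi (Suc n) (\<beta> k v) v = BB n \<phi>" if "v \<in> {c<..dd k}" for v
      using that of[of v] aw[of v] ki unfolding e
      by (auto simp: PL_u PL_v)
    thus ?thesis using w wk by auto
  next
    case False
    hence kn: "rk k < n" using k by auto
    have wk: "c < dd k" using ddb by auto
    have "Phi (Suc n) (\<alpha> k v) v = \<phi> (\<alpha> k (dd k)) (dd k) \<and> Phi (Suc n) (\<beta> k v) v = \<phi> (\<beta> k (dd k)) (dd k)"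
      if "v \<in> {c<..dd k}" for v
      using inv4[OF kn that] stepmap_fix[OF g' n kn, of v] that by (simp add: \<phi>_def)
    thus ?thesis using w wk by auto
  qed
  show ?thesis unfolding good_def using C1 C2 C3 C4 by blast
qed

lemma good_Phi: "good (Phi n) n"
proof (induction n)
  case 0 show ?case by (rule good0)
next
  case (Suc n) show ?case by (rule good_Suc[OF Suc.IH])
qed

end


context setting begin

definition M :: "real \<Rightarrow> nat" where "M y = Suc (Max (insert 0 (rk ` {i. y < dd i})))"

lemma M_gt: assumes "c < y" "y < dd i" shows "rk i < M y"
proof -
  have "rk i \<le> Max (insert 0 (rk ` {i. y < dd i}))"
    using fin_above'[OF assms(1)] assms(2) by (intro Max_ge) auto
  thus ?thesis by (simp add: M_def)
qed

lemma stable: assumes y: "c < y" and N: "M y \<le> N" shows "Phi N x y = Phi (M y) x y"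
  using N
proof (induction N rule: dec_induct)
  case base thus ?case by simp
next
  case (step n)
  have "stepmap n (Phi n) (Phi n x y) y = Phi n x y"
  proof (cases "n \<in> range rk")
    case True
    have "rk (idx n) = n" using idx_rk[OF True] .
    hence "\<not> y < dd (idx n)" using M_gt[OF y, of "idx n"] step by auto
    hence "Dn n \<le> y" by (simp add: Dn_def)
    thus ?thesis by (rule stepmap_above)
  next
    case False thus ?thesis by (simp add: stepmap_def)
  qed
  thus ?case using step by simp
qed

lemma M_mono: assumes "c < y1" "y1 \<le> y" shows "M y \<le> M y1"
proof -
  have "Max (insert 0 (rk ` {i. y < dd i})) \<le> Max (insert 0 (rk ` {i. y1 < dd i}))"
    using fin_above'[OF assms(1)] assms by (intro Max_mono) auto
  thus ?thesis by (simp add: M_def)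
qed

definition eta :: "real \<times> real \<Rightarrow> real \<times> real" where
  "eta z = (Phi (M (snd z)) (fst z) (snd z), snd z)"

lemma PhiN_cont: "continuous_on (UNIV \<times> {c<..}) (\<lambda>z. Phi N (fst z) (snd z))"
  using good_Phi[of N] unfolding good_def by blast

lemma Phi_sm: "c < y \<Longrightarrow> strict_mono (\<lambda>x. Phi N x y)"
  using good_Phi[of N] unfolding good_def by blast

lemma Phi_surj: "c < y \<Longrightarrow> surj (\<lambda>x. Phi N x y)"
  using good_Phi[of N] unfolding good_def by blast

lemma eta_cont: "continuous_on (UNIV \<times> {c<..}) eta"
proof -
  have U: "(UNIV::real set) \<times> {c<..} = (\<Union>y1\<in>{c<..}. (UNIV::real set) \<times> {y1<..})"
  proof (rule Set.set_eqI, rule iffI)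
    fix z :: "real \<times> real" assume "z \<in> UNIV \<times> {c<..}"
    hence "(c + snd z)/2 \<in> {c<..}" "z \<in> UNIV \<times> {(c + snd z)/2<..}" by (auto simp: mem_Times_iff)
    thus "z \<in> (\<Union>y1\<in>{c<..}. (UNIV::real set) \<times> {y1<..})" by blast
  qed auto
  have "continuous_on (\<Union>y1\<in>{c<..}. UNIV \<times> {y1<..}) eta"
  proof (rule continuous_on_open_UN)
    fix y1 :: real assume y1: "y1 \<in> {c<..}"
    show "open (UNIV \<times> {y1<..} :: (real \<times> real) set)" by (intro open_Times) auto
    have sub: "UNIV \<times> {y1<..} \<subseteq> UNIV \<times> {c<..}" using y1 by auto
    have "continuous_on (UNIV \<times> {y1<..}) (\<lambda>z. (Phi (M y1) (fst z) (snd z), snd z))"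
      using continuous_on_subset[OF PhiN_cont sub] by (intro continuous_intros) auto
    moreover have "(Phi (M y1) (fst z) (snd z), snd z) = eta z" if "z \<in> UNIV \<times> {y1<..}" for z
    proof -
      have "c < snd z" "y1 \<le> snd z" using that y1 by (auto simp: mem_Times_iff)
      thus ?thesis unfolding eta_def using stable[of "snd z" "M y1"] M_mono[of y1 "snd z"] y1 by auto
    qed
    ultimately show "continuous_on (UNIV \<times> {y1<..}) eta" by (rule continuous_on_eq) auto
  qed
  thus ?thesis using U by simp
qed

lemma eta_inj: "inj_on eta (UNIV \<times> {c<..})"
proof (rule inj_onI)
  fix z1 z2 assume z: "z1 \<in> UNIV \<times> {c<..}" "z2 \<in> UNIV \<times> {c<..}" and e: "eta z1 = eta z2"
  hence s: "snd z1 = snd z2" by (simp add: eta_def)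
  hence "Phi (M (snd z1)) (fst z1) (snd z1) = Phi (M (snd z1)) (fst z2) (snd z1)" using e by (simp add: eta_def)
  moreover have "c < snd z1" using z by (auto simp: mem_Times_iff)
  ultimately have "fst z1 = fst z2" using Phi_sm[of "snd z1" "M (snd z1)"] strict_mono_eq by metis
  thus "z1 = z2" using s by (simp add: prod_eq_iff)
qed

lemma eta_image: assumes "Y \<subseteq> {c<..}" shows "eta ` (UNIV \<times> Y) = UNIV \<times> Y"
proof (rule Set.set_eqI, rule iffI)
  fix z :: "real \<times> real" assume "z \<in> eta ` (UNIV \<times> Y)" thus "z \<in> UNIV \<times> Y" by (auto simp: eta_def)
next
  fix z :: "real \<times> real" assume z: "z \<in> UNIV \<times> Y"
  hence y: "c < snd z" using assms by (auto simp: mem_Times_iff)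
  obtain x where x: "Phi (M (snd z)) x (snd z) = fst z" using Phi_surj[OF y, of "M (snd z)"] by (metis surjD)
  have "eta (x, snd z) = z" using x by (simp add: eta_def)
  moreover have "(x, snd z) \<in> UNIV \<times> Y" using z by (auto simp: mem_Times_iff)
  ultimately show "z \<in> eta ` (UNIV \<times> Y)" by (metis image_eqI)
qed

lemma trap_const:
  assumes y: "y \<in> {c<..dd i}"
  shows "Phi (M y) (\<alpha> i y) y = Phi (M (dd i)) (\<alpha> i (dd i)) (dd i)
       \<and> Phi (M y) (\<beta> i y) y = Phi (M (dd i)) (\<beta> i (dd i)) (dd i)"
proof -
  define N where "N = max (M y) (max (M (dd i)) (Suc (rk i)))"
  have cy: "c < y" and cd: "c < dd i" using y ddb[of i] by auto
  have "rk i < N" by (simp add: N_def)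
  hence "Phi N (\<alpha> i y) y = Phi N (\<alpha> i (dd i)) (dd i) \<and> Phi N (\<beta> i y) y = Phi N (\<beta> i (dd i)) (dd i)"
    using good_Phi[of N] y unfolding good_def by blast
  moreover have "Phi N x y = Phi (M y) x y" for x using stable[OF cy, of N] by (simp add: N_def)
  moreover have "Phi N x (dd i) = Phi (M (dd i)) x (dd i)" for x using stable[OF cd, of N] by (simp add: N_def)
  ultimately show ?thesis by simp
qed

lemma trap_image:
  "\<exists>p q. p < q \<and> eta ` half_open_trapezoid c (dd i) (\<alpha> i) (\<beta> i) = {p..q} \<times> {c<..dd i}"
proof -
  define P where "P = Phi (M (dd i)) (\<alpha> i (dd i)) (dd i)"
  define Q where "Q = Phi (M (dd i)) (\<beta> i (dd i)) (dd i)"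
  have cd: "c < dd i" using ddb[of i] by auto
  have PQ: "P < Q" unfolding P_def Q_def
    using smD[where \<phi>="Phi (M (dd i))", OF Phi_sm[OF cd]] ab[of "dd i" i] cd by auto
  have tc: "Phi (M y) (\<alpha> i y) y = P \<and> Phi (M y) (\<beta> i y) y = Q" if "y \<in> {c<..dd i}" for y
    using trap_const[OF that] by (simp add: P_def Q_def)
  have "eta ` half_open_trapezoid c (dd i) (\<alpha> i) (\<beta> i) = {P..Q} \<times> {c<..dd i}"
  proof (rule Set.set_eqI, rule iffI)
    fix z :: "real \<times> real" assume "z \<in> eta ` half_open_trapezoid c (dd i) (\<alpha> i) (\<beta> i)"
    then obtain x y where xy: "\<alpha> i y \<le> x" "x \<le> \<beta> i y" "c < y" "y \<le> dd i" and z: "z = eta (x, y)"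
      by (auto simp: half_open_trapezoid_def)
    have yi: "y \<in> {c<..dd i}" using xy by auto
    have sm: "strict_mono (\<lambda>x. Phi (M y) x y)" using Phi_sm xy by blast
    have "P \<le> Phi (M y) x y" "Phi (M y) x y \<le> Q"
      using tc[OF yi] sm_le_iff[where \<phi>="Phi (M y)", OF sm] xy by metis+
    thus "z \<in> {P..Q} \<times> {c<..dd i}" using z xy by (simp add: eta_def)
  next
    fix z :: "real \<times> real" assume z: "z \<in> {P..Q} \<times> {c<..dd i}"
    obtain t y where ty: "z = (t, y)" "P \<le> t" "t \<le> Q" "y \<in> {c<..dd i}" using z by (cases z) auto
    have cy: "c < y" using ty by auto
    obtain x where x: "Phi (M y) x y = t" using Phi_surj[OF cy, of "M y"] by (metis surjD)
    have sm: "strict_mono (\<lambda>x. Phi (M y) x y)" using Phi_sm cy by blast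
    have "\<alpha> i y \<le> x" "x \<le> \<beta> i y"
      using tc[OF ty(4)] sm_le_iff[where \<phi>="Phi (M y)", OF sm] x ty by metis+
    hence "(x, y) \<in> half_open_trapezoid c (dd i) (\<alpha> i) (\<beta> i)" using ty by (auto simp: half_open_trapezoid_def)
    moreover have "eta (x, y) = z" using x ty by (simp add: eta_def)
    ultimately show "z \<in> eta ` half_open_trapezoid c (dd i) (\<alpha> i) (\<beta> i)" by (metis image_eqI)
  qed
  thus ?thesis using PQ by blast
qed

lemma main:
  "\<exists>(\<eta> :: real \<times> real \<Rightarrow> real \<times> real) \<eta>'. homeomorphism (UNIV \<times> {c<..d}) (UNIV \<times> {c<..d}) \<eta> \<eta>' \<and>
           (\<forall>y\<in>{c<..d}. \<eta> ` (UNIV \<times> {y}) = UNIV \<times> {y}) \<and>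
           (\<forall>i. \<exists>p q :: real. p < q \<and>
              \<eta> ` half_open_trapezoid c (dd i) (\<alpha> i) (\<beta> i) = {p..q} \<times> {c<..dd i})"
proof -
  have o: "open (UNIV \<times> {c<..} :: (real \<times> real) set)" by (intro open_Times) auto
  obtain g where h: "homeomorphism (UNIV \<times> {c<..}) (eta ` (UNIV \<times> {c<..})) eta g"
    using invariance_of_domain_homeomorphism[OF o eta_cont _ eta_inj] by auto
  have "eta ` (UNIV \<times> {c<..}) = UNIV \<times> {c<..}" by (rule eta_image) auto
  hence h2: "homeomorphism (UNIV \<times> {c<..d}) (UNIV \<times> {c<..d}) eta g"
    using h by (intro homeomorphism_of_subsets[OF h _ _ eta_image]) auto
  have "\<forall>y\<in>{c<..d}. eta ` (UNIV \<times> {y}) = UNIV \<times> {y}" by (auto intro!: eta_image)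
  thus ?thesis using h2 trap_image by blast
qed

end

theorem proposition5p2:
  fixes c d :: real
    and dd :: "nat \<Rightarrow> real"
    and \<alpha> \<beta> :: "nat \<Rightarrow> real \<Rightarrow> real"
  assumes "c < d"
    and "\<And>i. c < dd i \<and> dd i \<le> d"
    and "\<And>i. continuous_on {c<..dd i} (\<alpha> i)"
    and "\<And>i. continuous_on {c<..dd i} (\<beta> i)"
    and "\<And>i y. y \<in> {c<..dd i} \<Longrightarrow> \<alpha> i y < \<beta> i y"
    and "\<And>i j. i \<noteq> j \<Longrightarrow>
           half_open_trapezoid c (dd i) (\<alpha> i) (\<beta> i) \<inter> half_open_trapezoid c (dd j) (\<alpha> j) (\<beta> j) = {}"
    and "dd \<longlonglongrightarrow> c"
  shows "\<exists>(\<eta> :: real \<times> real \<Rightarrow> real \<times> real) \<eta>'. homeomorphism (UNIV \<times> {c<..d}) (UNIV \<times> {c<..d}) \<eta> \<eta>' \<and>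
           (\<forall>y\<in>{c<..d}. \<eta> ` (UNIV \<times> {y}) = UNIV \<times> {y}) \<and>
           (\<forall>i. \<exists>p q :: real. p < q \<and>
              \<eta> ` half_open_trapezoid c (dd i) (\<alpha> i) (\<beta> i) = {p..q} \<times> {c<..dd i})"
proof -
  interpret setting c d dd \<alpha> \<beta>
    using assms by unfold_locales auto
  show ?thesis by (rule main)
qed

end
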